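(* Let $G$ be a graph with $\theta(G)=3$ and $|V(G)|>4$. By the known structure theorem, $|V(G)|=2p$ for a prime $p\notin\{3,5\}$, and $V(G)$ is partitioned into the two degree classes $\mathcal{A}_1,\mathcal{A}_2$ with $|\mathcal{A}_1|=|\mathcal{A}_2|=p$. Then for each $i\in\{1,2\}$ and each $v\in\mathcal{A}_i$, the number of edges of $G$ joining $v$ to a vertex of $\mathcal{A}_{3-i}$ satisfies $$3\le |[v,\mathcal{A}_{3-i}]|\le p-3.$$
   Context: All graphs are finite and simple. A vertex coloring with $k$ colors is a surjective map $V(G)\to\{1,\dots,k\}$. It is distinguishing if only the identity automorphism preserves it. The distinguishing threshold $\theta(G)$ is the least $k$ such that every vertex coloring of $G$ using exactly $k$ colors is distinguishing. Equivalently, $\theta(G)=\max\{|\alpha| : \alpha\in\mathrm{Aut}(G)\setminus\{\mathrm{id}\}\}+1$, where $|\alpha|$ is the number of cycles (including fixed points) of $\alpha$ on $V(G)$. Known structure theorem (may be used): if $\theta(G)=3$ and $|V(G)|\neq 3$, then $|V(G)|=2p$ for a prime $p\ne 3,5$. Moreover, $G$ is a connected bi-regular graph whose two degree classes $\mathcal{A}_1=\{v_1,\dots,v_p\}$ and $\mathcal{A}_2=\{u_1,\dots,u_p\}$ induce non-isomorphic circulant graphs $G[\mathcal{A}_1]$ and $G[\mathcal{A}_2]$. $[v,\mathcal{A}]$ denotes the set of edges with one endpoint $v$ and the other endpoint in $\mathcal{A}$. *)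

theory Defs
  imports "HOL-Computational_Algebra.Primes"
begin

definition simple_graph :: "'a set \<Rightarrow> ('a \<Rightarrow> 'a \<Rightarrow> bool) \<Rightarrow> bool" where
  "simple_graph V E \<longleftrightarrow> finite V \<and> (\<forall>x y. E x y \<longrightarrow> x \<in> V \<and> y \<in> V)
     \<and> (\<forall>x y. E x y \<longrightarrow> E y x) \<and> (\<forall>x. \<not> E x x)"

definition degree :: "'a set \<Rightarrow> ('a \<Rightarrow> 'a \<Rightarrow> bool) \<Rightarrow> 'a \<Rightarrow> nat" where
  "degree V E v = card {u \<in> V. E v u}"

definition automorphism :: "'a set \<Rightarrow> ('a \<Rightarrow> 'a \<Rightarrow> bool) \<Rightarrow> ('a \<Rightarrow> 'a) \<Rightarrow> bool" where
  "automorphism V E \<sigma> \<longleftrightarrow> bij_betw \<sigma> V V \<and> (\<forall>x\<in>V. \<forall>y\<in>V. E (\<sigma> x) (\<sigma> y) \<longleftrightarrow> E x y)"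

definition distinguishing :: "'a set \<Rightarrow> ('a \<Rightarrow> 'a \<Rightarrow> bool) \<Rightarrow> ('a \<Rightarrow> nat) \<Rightarrow> bool" where
  "distinguishing V E c \<longleftrightarrow>
     (\<forall>\<sigma>. automorphism V E \<sigma> \<and> (\<forall>x\<in>V. c (\<sigma> x) = c x) \<longrightarrow> (\<forall>x\<in>V. \<sigma> x = x))"

definition dist_threshold :: "'a set \<Rightarrow> ('a \<Rightarrow> 'a \<Rightarrow> bool) \<Rightarrow> nat" where
  "dist_threshold V E = (LEAST k. k \<ge> 1 \<and>
     (\<forall>c :: 'a \<Rightarrow> nat. c ` V = {1..k} \<longrightarrow> distinguishing V E c))"

end

theory Submission
  imports Defs
begin


lemma theta_facts:
  assumes G: "simple_graph V E" and th: "dist_threshold V E = 3"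
  shows "\<forall>c::'a\<Rightarrow>nat. c ` V = {1..3} \<longrightarrow> distinguishing V E c"
    and "\<exists>\<sigma>. automorphism V E \<sigma> \<and> (\<exists>x\<in>V. \<sigma> x \<noteq> x)"
proof -
  define P where "P = (\<lambda>k::nat. k \<ge> 1 \<and>
     (\<forall>c :: 'a \<Rightarrow> nat. c ` V = {1..k} \<longrightarrow> distinguishing V E c))"
  have fin: "finite V" using G by (simp add: simple_graph_def)
  have "P (card V + 1)"
  proof -
    have "c ` V \<noteq> {1..card V + 1}" for c :: "'a \<Rightarrow> nat"
    proof
      assume "c ` V = {1..card V + 1}"
      then have "card (c ` V) = card V + 1" by simp
      moreover have "card (c ` V) \<le> card V" using fin by (rule card_image_le)
      ultimately show False by simp
    qed
    then show ?thesis unfolding P_def by auto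
  qed
  then have "P (LEAST k. P k)" by (rule LeastI)
  moreover have L: "(LEAST k. P k) = 3" using th unfolding dist_threshold_def P_def by simp
  ultimately have "P 3" by simp
  then show "\<forall>c::'a\<Rightarrow>nat. c ` V = {1..3} \<longrightarrow> distinguishing V E c" unfolding P_def by simp
  have "\<not> P 2" by (rule not_less_Least) (simp add: L)
  then obtain c :: "'a \<Rightarrow> nat" where "c ` V = {1..2}" "\<not> distinguishing V E c"
    unfolding P_def by auto
  then show "\<exists>\<sigma>. automorphism V E \<sigma> \<and> (\<exists>x\<in>V. \<sigma> x \<noteq> x)"
    unfolding distinguishing_def by blast
qed

lemma aut_degree:
  assumes G: "simple_graph V E" and au: "automorphism V E \<sigma>" and x: "x \<in> V"
  shows "degree V E (\<sigma> x) = degree V E x"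
proof -
  have b: "bij_betw \<sigma> V V" and e: "\<forall>x\<in>V. \<forall>y\<in>V. E (\<sigma> x) (\<sigma> y) \<longleftrightarrow> E x y"
    using au by (auto simp: automorphism_def)
  have sx: "\<sigma> x \<in> V" using b x by (auto simp: bij_betw_def)
  have "{u\<in>V. E (\<sigma> x) u} = \<sigma> ` {u\<in>V. E x u}"
  proof
    show "\<sigma> ` {u\<in>V. E x u} \<subseteq> {u\<in>V. E (\<sigma> x) u}" using b e x by (auto simp: bij_betw_def)
    show "{u\<in>V. E (\<sigma> x) u} \<subseteq> \<sigma> ` {u\<in>V. E x u}"
    proof
      fix u assume u: "u \<in> {u\<in>V. E (\<sigma> x) u}"
      then obtain w where w: "w \<in> V" "u = \<sigma> w" using b by (auto simp: bij_betw_def)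
      then show "u \<in> \<sigma> ` {u\<in>V. E x u}" using u e x by auto
    qed
  qed
  moreover have "inj_on \<sigma> {u\<in>V. E x u}" using b by (auto simp: bij_betw_def intro: inj_on_subset)
  ultimately show ?thesis unfolding degree_def by (simp add: card_image)
qed

lemma aut_funpow:
  assumes au: "automorphism V E \<sigma>"
  shows "x \<in> V \<Longrightarrow> (\<sigma>^^n) x \<in> V"
    and "x \<in> V \<Longrightarrow> y \<in> V \<Longrightarrow> E ((\<sigma>^^n) x) ((\<sigma>^^n) y) \<longleftrightarrow> E x y"
proof -
  have b: "bij_betw \<sigma> V V" and e: "\<forall>x\<in>V. \<forall>y\<in>V. E (\<sigma> x) (\<sigma> y) \<longleftrightarrow> E x y"
    using au by (auto simp: automorphism_def)
  have m: "z \<in> V \<Longrightarrow> (\<sigma>^^n) z \<in> V" for z n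
    by (induction n) (use b in \<open>auto simp: bij_betw_def\<close>)
  show "x \<in> V \<Longrightarrow> (\<sigma>^^n) x \<in> V" by (rule m)
  show "x \<in> V \<Longrightarrow> y \<in> V \<Longrightarrow> E ((\<sigma>^^n) x) ((\<sigma>^^n) y) \<longleftrightarrow> E x y"
    by (induction n) (auto simp: e m)
qed

lemma period:
  assumes inj: "inj_on \<sigma> V" and sub: "\<sigma> ` V \<subseteq> V" and x: "x \<in> V" and fin: "finite V"
    and c: "card (range (\<lambda>n. (\<sigma>^^n) x)) = p"
  shows "(\<sigma>^^p) x = x" and "inj_on (\<lambda>n. (\<sigma>^^n) x) {..<p}"
proof -
  define f where "f = (\<lambda>n. (\<sigma>^^n) x)"
  have fV: "f n \<in> V" for n unfolding f_def by (induction n) (use x sub in auto)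
  have finO: "finite (range f)" using fV fin by (meson finite_subset image_subset_iff)
  have injn: "inj_on (\<sigma>^^n) V" for n
  proof (induction n)
    case 0 then show ?case by simp
  next
    case (Suc n)
    have "inj_on (\<sigma> \<circ> (\<sigma>^^n)) V"
    proof (rule comp_inj_on[OF Suc])
      have "(\<sigma>^^n) ` V \<subseteq> V" by (induction n) (use sub in auto)
      then show "inj_on \<sigma> ((\<sigma> ^^ n) ` V)" using inj inj_on_subset by blast
    qed
    then show ?case by (simp add: comp_def)
  qed
  have "\<not> inj_on f {..p}"
  proof
    assume "inj_on f {..p}"
    then have "card (f ` {..p}) = p + 1" by (simp add: card_image)
    moreover have "card (f ` {..p}) \<le> card (range f)" using finO by (intro card_mono) auto
    ultimately show False using c unfolding f_def by simp
  qed
  then obtain i j where ij: "i < j" "j \<le> p" "f i = f j"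
    unfolding inj_on_def by (metis atMost_iff linorder_neqE_nat)
  define d where "d = j - i"
  have "(\<sigma>^^i) (f d) = (\<sigma>^^i) x"
  proof -
    have "(\<sigma>^^i) (f d) = (\<sigma>^^(i + d)) x" unfolding f_def by (simp add: funpow_add)
    also have "i + d = j" using ij unfolding d_def by simp
    finally show ?thesis using ij unfolding f_def by simp
  qed
  then have fd: "f d = x" using injn[of i] fV x unfolding inj_on_def by (metis f_def funpow_0)
  have d: "0 < d" "d \<le> p" using ij unfolding d_def by auto
  have "range f \<subseteq> f ` {..<d}"
  proof
    fix y assume "y \<in> range f"
    then obtain n where "y = f n" by auto
    then have "y = f (n mod d)" using fd unfolding f_def by (simp add: funpow_mod_eq)
    then show "y \<in> f ` {..<d}" using d by auto
  qed
  then have "p \<le> d" using c card_mono[of "f ` {..<d}" "range f"] card_image_le[of "{..<d}" f]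
    unfolding f_def by fastforce
  then have dp: "d = p" using d by simp
  then show "(\<sigma>^^p) x = x" using fd unfolding f_def by simp
  have "f ` {..<p} = range f" using \<open>range f \<subseteq> f ` {..<d}\<close> dp by auto
  then have "card (f ` {..<p}) = card {..<p}" using c unfolding f_def by simp
  then show "inj_on (\<lambda>n. (\<sigma>^^n) x) {..<p}" unfolding f_def by (intro eq_card_imp_inj_on) auto
qed



definition orbit_fun :: "('a \<Rightarrow> 'a) \<Rightarrow> nat \<Rightarrow> 'a \<Rightarrow> int \<Rightarrow> 'a" where
  "orbit_fun \<sigma> p x i = (\<sigma>^^nat (i mod int p)) x"

lemma OF_mod: "i mod int p = j mod int p \<Longrightarrow> orbit_fun \<sigma> p x i = orbit_fun \<sigma> p x j"
  by (simp add: orbit_fun_def)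

lemma OF_add_nat:
  assumes "(\<sigma>^^p) x = x" "0 < p"
  shows "orbit_fun \<sigma> p x (i + int n) = (\<sigma>^^n) (orbit_fun \<sigma> p x i)"
proof -
  have "(\<sigma>^^n) (orbit_fun \<sigma> p x i) = (\<sigma>^^(n + nat (i mod int p))) x"
    by (simp add: orbit_fun_def funpow_add)
  also have "\<dots> = (\<sigma>^^((n + nat (i mod int p)) mod p)) x" using assms by (simp add: funpow_mod_eq)
  also have "(n + nat (i mod int p)) mod p = nat ((i + int n) mod int p)"
  proof -
    have "int ((n + nat (i mod int p)) mod p) = (int n + i mod int p) mod int p"
      using assms by (simp add: zmod_int)
    also have "\<dots> = (i + int n) mod int p" by (simp add: mod_add_right_eq add.commute)
    finally show ?thesis by simp
  qed
  finally show ?thesis by (simp add: orbit_fun_def)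
qed

lemma OF_suc:
  assumes "(\<sigma>^^p) x = x" "0 < p"
  shows "orbit_fun \<sigma> p x (i + 1) = \<sigma> (orbit_fun \<sigma> p x i)"
  using OF_add_nat[OF assms, of i 1] by simp

lemma OF_0: "orbit_fun \<sigma> p x 0 = x" by (simp add: orbit_fun_def)

lemma OF_in: "x \<in> V \<Longrightarrow> \<sigma> ` V \<subseteq> V \<Longrightarrow> orbit_fun \<sigma> p x i \<in> V"
proof -
  assume "x \<in> V" "\<sigma> ` V \<subseteq> V"
  then have "(\<sigma>^^n) x \<in> V" for n by (induction n) auto
  then show ?thesis by (simp add: orbit_fun_def)
qed

lemma OF_shift:
  assumes au: "automorphism V E \<sigma>" and x: "x \<in> V" and y: "y \<in> V"
    and px: "(\<sigma>^^p) x = x" and py: "(\<sigma>^^p) y = y" and p: "0 < p"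
  shows "E (orbit_fun \<sigma> p x (i + k)) (orbit_fun \<sigma> p y (j + k)) \<longleftrightarrow>
         E (orbit_fun \<sigma> p x i) (orbit_fun \<sigma> p y j)"
proof -
  define n where "n = nat (k mod int p)"
  have kn: "(i + k) mod int p = (i + int n) mod int p" "(j + k) mod int p = (j + int n) mod int p"
    using p unfolding n_def by (simp_all add: mod_add_right_eq)
  have sub: "\<sigma> ` V \<subseteq> V" using au by (auto simp: automorphism_def bij_betw_def)
  have "orbit_fun \<sigma> p x (i + k) = (\<sigma>^^n) (orbit_fun \<sigma> p x i)"
    using OF_mod[OF kn(1), of \<sigma> x] OF_add_nat[OF px p, of i n] by simp
  moreover have "orbit_fun \<sigma> p y (j + k) = (\<sigma>^^n) (orbit_fun \<sigma> p y j)"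
    using OF_mod[OF kn(2), of \<sigma> y] OF_add_nat[OF py p, of j n] by simp
  ultimately show ?thesis using aut_funpow(2)[OF au] OF_in[OF x sub] OF_in[OF y sub] by simp
qed

lemma refl_exists:
  fixes D :: "int set" and p :: int
  assumes "D \<subseteq> {0..<p}" "card D \<le> 2" "0 < p"
  shows "\<exists>c. \<forall>s. (c - s) mod p \<in> D \<longleftrightarrow> s mod p \<in> D"
proof -
  have fin: "finite D" using assms(1) finite_subset by blast
  have "card D = 0 \<or> card D = 1 \<or> card D = 2" using assms(2) by auto
  then show ?thesis
  proof (elim disjE)
    assume "card D = 0" then have "D = {}" using fin by simp
    then show ?thesis by simp
  next
    assume "card D = 1" then obtain t where t: "D = {t}" by (auto simp: card_Suc_eq)
    then have tr: "0 \<le> t" "t < p" using assms(1) by auto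
    have "(2*t - s) mod p = t \<longleftrightarrow> s mod p = t" for s
    proof -
      have "(2*t - s) mod p = t \<longleftrightarrow> (2*t - s) mod p = t mod p" using tr by simp
      also have "\<dots> \<longleftrightarrow> p dvd (t - s)" by (simp add: mod_eq_dvd_iff algebra_simps)
      also have "\<dots> \<longleftrightarrow> t mod p = s mod p" by (simp add: mod_eq_dvd_iff)
      finally show ?thesis using tr by auto
    qed
    then show ?thesis using t by auto
  next
    assume "card D = 2" then obtain t u where t: "D = {t, u}" by (auto simp: card_2_iff)
    then have tr: "0 \<le> t" "t < p" "0 \<le> u" "u < p" using assms(1) by auto
    have "(t + u - s) mod p = t \<longleftrightarrow> s mod p = u" for s
    proof -
      have "(t + u - s) mod p = t \<longleftrightarrow> (t + u - s) mod p = t mod p" using tr by simp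
      also have "\<dots> \<longleftrightarrow> p dvd (u - s)" by (simp add: mod_eq_dvd_iff algebra_simps)
      also have "\<dots> \<longleftrightarrow> u mod p = s mod p" by (simp add: mod_eq_dvd_iff)
      finally show ?thesis using tr by auto
    qed
    moreover have "(t + u - s) mod p = u \<longleftrightarrow> s mod p = t" for s
    proof -
      have "(t + u - s) mod p = u \<longleftrightarrow> (t + u - s) mod p = u mod p" using tr by simp
      also have "\<dots> \<longleftrightarrow> p dvd (t - s)" by (simp add: mod_eq_dvd_iff algebra_simps)
      also have "\<dots> \<longleftrightarrow> t mod p = s mod p" by (simp add: mod_eq_dvd_iff)
      finally show ?thesis using tr by auto
    qed
    ultimately show ?thesis using t by (intro exI[of _ "t + u"]) auto
  qed
qed

lemma orbit_full:
  assumes G: "simple_graph V E" and au: "automorphism V E \<sigma>" and nt: "\<exists>x\<in>V. \<sigma> x \<noteq> x"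
    and D3: "\<forall>c::'a\<Rightarrow>nat. c ` V = {1..3} \<longrightarrow> distinguishing V E c"
    and part: "A1 \<union> A2 = V" "A1 \<inter> A2 = {}" "A2 \<noteq> {}"
    and inv: "\<forall>x\<in>V. \<sigma> x \<in> A1 \<longleftrightarrow> x \<in> A1" and a: "a \<in> A1"
  shows "range (\<lambda>n. (\<sigma>^^n) a) = A1"
proof (rule ccontr)
  define Ob where "Ob = range (\<lambda>n. (\<sigma>^^n) a)"
  assume ne: "range (\<lambda>n. (\<sigma>^^n) a) \<noteq> A1"
  have b: "bij_betw \<sigma> V V" using au by (simp add: automorphism_def)
  have fin: "finite V" using G by (simp add: simple_graph_def)
  have ObA: "Ob \<subseteq> A1"
  proof -
    have "(\<sigma>^^n) a \<in> A1" for n by (induction n) (use a inv part in auto)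
    then show ?thesis unfolding Ob_def by auto
  qed
  then obtain y where y: "y \<in> A1" "y \<notin> Ob" using ne unfolding Ob_def by auto
  obtain z where z: "z \<in> A2" using part by auto
  have aO: "a \<in> Ob" unfolding Ob_def by (metis funpow_0 rangeI)
  have sO: "\<sigma> ` Ob \<subseteq> Ob" unfolding Ob_def by (auto simp del: funpow.simps simp: funpow_Suc_right[symmetric] comp_def) (metis funpow.simps(2) comp_apply rangeI)
  have OV: "Ob \<subseteq> V" using ObA part by auto
  have injO: "inj_on \<sigma> Ob" using b OV by (auto simp: bij_betw_def intro: inj_on_subset)
  have sOO: "\<sigma> ` Ob = Ob" using endo_inj_surj[OF finite_subset[OF OV fin] sO injO] .
  have Oinv: "\<sigma> x \<in> Ob \<longleftrightarrow> x \<in> Ob" if "x \<in> V" for x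
  proof
    assume "\<sigma> x \<in> Ob"
    then obtain w where "w \<in> Ob" "\<sigma> x = \<sigma> w" using sOO by (metis imageE)
    then show "x \<in> Ob" using b that OV by (metis bij_betw_def inj_on_def subsetD)
  qed (use sO in auto)
  define c :: "'a \<Rightarrow> nat" where "c x = (if x \<in> Ob then 1 else if x \<in> A1 then 2 else 3)" for x
  have "c ` V = {1..3}"
  proof
    show "c ` V \<subseteq> {1..3}" unfolding c_def by auto
    have "c a = 1" "c y = 2" "c z = 3" using aO y z part ObA unfolding c_def by auto
    moreover have "a \<in> V" "y \<in> V" "z \<in> V" using a y z part by auto
    ultimately show "{1..3} \<subseteq> c ` V" by (auto simp: numeral_eq_Suc le_Suc_eq) (metis imageI)+
  qed
  moreover have "\<forall>x\<in>V. c (\<sigma> x) = c x" using Oinv inv unfolding c_def by auto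
  ultimately have "\<forall>x\<in>V. \<sigma> x = x" using D3 au unfolding distinguishing_def by blast
  then show False using nt by auto
qed



lemma OF_image:
  assumes "(\<sigma>^^p) x = x" "0 < p"
  shows "orbit_fun \<sigma> p x ` {0..<int p} = range (\<lambda>n. (\<sigma>^^n) x)"
proof
  show "orbit_fun \<sigma> p x ` {0..<int p} \<subseteq> range (\<lambda>n. (\<sigma>^^n) x)"
    by (auto simp: orbit_fun_def)
  show "range (\<lambda>n. (\<sigma>^^n) x) \<subseteq> orbit_fun \<sigma> p x ` {0..<int p}"
  proof
    fix y assume "y \<in> range (\<lambda>n. (\<sigma>^^n) x)"
    then obtain n where n: "y = (\<sigma>^^n) x" by auto
    then have "y = (\<sigma>^^(n mod p)) x" using assms by (simp add: funpow_mod_eq)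
    also have "\<dots> = orbit_fun \<sigma> p x (int (n mod p))" by (simp add: orbit_fun_def flip: zmod_int)
    finally show "y \<in> orbit_fun \<sigma> p x ` {0..<int p}" using assms(2)
      by (intro image_eqI[of _ _ "int (n mod p)"]) auto
  qed
qed

lemma OF_inj:
  assumes "inj_on (\<lambda>n. (\<sigma>^^n) x) {..<p}"
  shows "inj_on (orbit_fun \<sigma> p x) {0..<int p}"
proof (rule inj_onI)
  fix i j assume ij: "i \<in> {0..<int p}" "j \<in> {0..<int p}" "orbit_fun \<sigma> p x i = orbit_fun \<sigma> p x j"
  then have "(\<sigma>^^nat i) x = (\<sigma>^^nat j) x" by (simp add: orbit_fun_def)
  moreover have "nat i \<in> {..<p}" "nat j \<in> {..<p}" using ij by auto
  ultimately have "nat i = nat j" using assms by (auto simp: inj_on_def)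
  then show "i = j" using ij by (simp add: nat_eq_iff2)
qed

lemma OF_idx:
  assumes "inj_on (orbit_fun \<sigma> p x) {0..<int p}" "0 < p"
  shows "inv_into {0..<int p} (orbit_fun \<sigma> p x) (orbit_fun \<sigma> p x i) = i mod int p"
proof -
  have "orbit_fun \<sigma> p x i = orbit_fun \<sigma> p x (i mod int p)" by (rule OF_mod) simp
  moreover have "i mod int p \<in> {0..<int p}" using assms(2) by simp
  ultimately show ?thesis using assms(1) by (simp add: inv_into_f_f)
qed



lemma side:
  fixes V :: "'a set" and E :: "'a \<Rightarrow> 'a \<Rightarrow> bool"
    and A1 A2 :: "'a set" and p :: nat
  assumes G: "simple_graph V E"
    and theta: "dist_threshold V E = 3"
    and size: "card V > 4"
    and p: "prime p" "card V = 2 * p"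
    and part: "A1 \<union> A2 = V" "A1 \<inter> A2 = {}" "card A1 = p" "card A2 = p"
    and classes: "\<forall>x\<in>A1. \<forall>y\<in>A2. degree V E x \<noteq> degree V E y"
  shows "\<forall>v\<in>A1. 3 \<le> card {u\<in>A2. E v u} \<and> card {u\<in>A2. E v u} \<le> p - 3"
proof
  have p3: "p \<ge> 3" using p size prime_ge_2_nat[OF p(1)] by linarith
  have pp: "0 < p" using p3 by simp
  have fin: "finite V" and Esym: "\<And>x y. E x y \<Longrightarrow> E y x" and EV: "\<And>x y. E x y \<Longrightarrow> x \<in> V \<and> y \<in> V"
    using G by (auto simp: simple_graph_def)
  obtain \<sigma> where au: "automorphism V E \<sigma>" and nt: "\<exists>x\<in>V. \<sigma> x \<noteq> x"
    using theta_facts(2)[OF G theta] by blast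
  have D3: "\<forall>c::'a\<Rightarrow>nat. c ` V = {1..3} \<longrightarrow> distinguishing V E c"
    using theta_facts(1)[OF G theta] .
  have b: "bij_betw \<sigma> V V" using au by (simp add: automorphism_def)
  have sub: "\<sigma> ` V \<subseteq> V" and injs: "inj_on \<sigma> V" using b by (auto simp: bij_betw_def)
  have inv1: "\<forall>x\<in>V. \<sigma> x \<in> A1 \<longleftrightarrow> x \<in> A1"
  proof
    fix x assume x: "x \<in> V"
    have d: "degree V E (\<sigma> x) = degree V E x" by (rule aut_degree[OF G au x])
    have "\<sigma> x \<in> V" using x sub by auto
    then show "\<sigma> x \<in> A1 \<longleftrightarrow> x \<in> A1" using x d classes part(1,2) by auto metis+
  qed
  have inv2: "\<forall>x\<in>V. \<sigma> x \<in> A2 \<longleftrightarrow> x \<in> A2"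
  proof
    fix x assume x: "x \<in> V"
    have "\<sigma> x \<in> V" using x sub by auto
    then show "\<sigma> x \<in> A2 \<longleftrightarrow> x \<in> A2" using x inv1 part(1,2) by blast
  qed
  have A1ne: "A1 \<noteq> {}" and A2ne: "A2 \<noteq> {}" using part(3,4) pp by auto
  obtain b where bA: "b \<in> A2" using A2ne by auto
  fix v assume vA: "v \<in> A1"
  have vV: "v \<in> V" and bV: "b \<in> V" using vA bA part by auto
  have rv: "range (\<lambda>n. (\<sigma>^^n) v) = A1"
    by (rule orbit_full[OF G au nt D3 part(1,2) A2ne inv1 vA])
  have rb: "range (\<lambda>n. (\<sigma>^^n) b) = A2"
    by (rule orbit_full[OF G au nt D3 _ _ A1ne inv2 bA]) (use part in auto)
  have pv: "(\<sigma>^^p) v = v" and iv: "inj_on (\<lambda>n. (\<sigma>^^n) v) {..<p}"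
    using period[OF injs sub vV fin] rv part(3) by auto
  have pb: "(\<sigma>^^p) b = b" and ib: "inj_on (\<lambda>n. (\<sigma>^^n) b) {..<p}"
    using period[OF injs sub bV fin] rb part(4) by auto
  define X where "X = orbit_fun \<sigma> p v"
  define Y where "Y = orbit_fun \<sigma> p b"
  have XA: "X ` {0..<int p} = A1" unfolding X_def using OF_image[OF pv pp] rv by simp
  have YA: "Y ` {0..<int p} = A2" unfolding Y_def using OF_image[OF pb pp] rb by simp
  have Xi: "inj_on X {0..<int p}" unfolding X_def by (rule OF_inj[OF iv])
  have Yi: "inj_on Y {0..<int p}" unfolding Y_def by (rule OF_inj[OF ib])
  have Xm: "X i = X (i mod int p)" for i unfolding X_def by (rule OF_mod) simp
  have Ym: "Y i = Y (i mod int p)" for i unfolding Y_def by (rule OF_mod) simp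
  have modr: "i mod int p \<in> {0..<int p}" for i using pp by simp
  have XA1: "X i \<in> A1" for i using Xm[of i] XA modr[of i] by (metis imageI)
  have YA2: "Y i \<in> A2" for i using Ym[of i] YA modr[of i] by (metis imageI)
  have X0: "X 0 = v" unfolding X_def by (rule OF_0)
  have shXY: "E (X (i + k)) (Y (j + k)) \<longleftrightarrow> E (X i) (Y j)" for i j k
    unfolding X_def Y_def by (rule OF_shift[OF au vV bV pv pb pp])
  have shXX: "E (X (i + k)) (X (j + k)) \<longleftrightarrow> E (X i) (X j)" for i j k
    unfolding X_def by (rule OF_shift[OF au vV vV pv pv pp])
  have shYY: "E (Y (i + k)) (Y (j + k)) \<longleftrightarrow> E (Y i) (Y j)" for i j k
    unfolding Y_def by (rule OF_shift[OF au bV bV pb pb pp])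
  define F where "F = {t\<in>{0..<int p}. E v (Y t)}"
  have NF: "{u\<in>A2. E v u} = Y ` F" unfolding F_def using YA by auto
  have cNF: "card {u\<in>A2. E v u} = card F" unfolding NF
    by (rule card_image, rule inj_on_subset[OF Yi]) (auto simp: F_def)
  have EF: "E v (Y s) \<longleftrightarrow> s mod int p \<in> F" for s
    using Ym[of s] pp unfolding F_def by simp
  have Fsub: "F \<subseteq> {0..<int p}" unfolding F_def by auto
  have finF: "finite F" using Fsub finite_subset by blast
  show "3 \<le> card {u\<in>A2. E v u} \<and> card {u\<in>A2. E v u} \<le> p - 3"
  proof (rule ccontr)
    assume nc: "\<not> ?thesis"
    have "\<exists>c. \<forall>s. E v (Y (c - s)) \<longleftrightarrow> E v (Y s)"
    proof (cases "card F \<le> 2")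
      case True
      then obtain c where "\<forall>s. (c - s) mod int p \<in> F \<longleftrightarrow> s mod int p \<in> F"
        using refl_exists[OF Fsub _, of] pp by auto
      then show ?thesis using EF by auto
    next
      case False
      then have "card F \<ge> p - 2" using nc cNF by linarith
      define D where "D = {0..<int p} - F"
      have "card D = p - card F" unfolding D_def using Fsub by (simp add: card_Diff_subset finF)
      then have "card D \<le> 2" using \<open>card F \<ge> p - 2\<close> by linarith
      then obtain c where c: "\<forall>s. (c - s) mod int p \<in> D \<longleftrightarrow> s mod int p \<in> D"
        using refl_exists[of D "int p"] pp unfolding D_def by auto
      have "(c - s) mod int p \<in> F \<longleftrightarrow> s mod int p \<in> F" for s
        using c[rule_format, of s] pp unfolding D_def by auto
      then show ?thesis using EF by auto
    qed
    then obtain c where hc: "\<And>s. E v (Y (c - s)) \<longleftrightarrow> E v (Y s)" by blast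
    define iX where "iX = inv_into {0..<int p} X"
    define iY where "iY = inv_into {0..<int p} Y"
    have iXX: "iX (X i) = i mod int p" for i unfolding iX_def X_def
      by (rule OF_idx[OF _ pp]) (use Xi X_def in simp)
    have iYY: "iY (Y i) = i mod int p" for i unfolding iY_def Y_def
      by (rule OF_idx[OF _ pp]) (use Yi Y_def in simp)
    define \<tau> where "\<tau> x = (if x \<in> A1 then X (- iX x) else if x \<in> A2 then Y (c - iY x) else x)" for x
    have tX: "\<tau> (X i) = X (- i)" for i
    proof -
      have "\<tau> (X i) = X (- (i mod int p))" using XA1 iXX unfolding \<tau>_def by simp
      also have "\<dots> = X (- i)" using Xm by (metis mod_minus_eq)
      finally show ?thesis .
    qed
    have tY: "\<tau> (Y i) = Y (c - i)" for i
    proof -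
      have "Y i \<notin> A1" using YA2 part(2) by blast
      then have "\<tau> (Y i) = Y (c - (i mod int p))" using YA2 iYY unfolding \<tau>_def by simp
      also have "\<dots> = Y (c - i)" using Ym by (metis mod_diff_right_eq)
      finally show ?thesis .
    qed
    have cases: "x \<in> V \<Longrightarrow> (\<exists>i. x = X i) \<or> (\<exists>j. x = Y j)" for x
      using XA YA part(1) by blast
    have tt: "\<tau> (\<tau> x) = x" if "x \<in> V" for x
      using cases[OF that] tX tY by auto
    have tV: "\<tau> x \<in> V" if "x \<in> V" for x
      using cases[OF that] tX tY XA1 YA2 part(1) by auto
    have tinj: "inj_on \<tau> V" by (metis inj_onI tt)
    have timg: "\<tau> ` V = V"
    proof
      show "\<tau> ` V \<subseteq> V" using tV by auto
      show "V \<subseteq> \<tau> ` V" using tt tV by (metis image_eqI subsetI)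
    qed
    have EXX: "E (X (-i)) (X (-j)) \<longleftrightarrow> E (X i) (X j)" for i j
      using shXX[of "-i" "i+j" "-j"] Esym by auto
    have EYY: "E (Y (c-i)) (Y (c-j)) \<longleftrightarrow> E (Y i) (Y j)" for i j
      using shYY[of "c-i" "i+j-c" "c-j"] Esym by auto
    have EXY: "E (X (-i)) (Y (c-j)) \<longleftrightarrow> E (X i) (Y j)" for i j
    proof -
      have "E (X (-i)) (Y (c-j)) \<longleftrightarrow> E (X 0) (Y (c - (j - i)))"
        using shXY[of "-i" i "c-j"] by (simp add: algebra_simps)
      also have "\<dots> \<longleftrightarrow> E (X 0) (Y (j - i))" using hc X0 by simp
      also have "\<dots> \<longleftrightarrow> E (X i) (Y j)" using shXY[of 0 i "j-i"] by simp
      finally show ?thesis .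
    qed
    have aut: "automorphism V E \<tau>"
      unfolding automorphism_def
    proof (intro conjI ballI)
      show "bij_betw \<tau> V V" using tinj timg by (simp add: bij_betw_def)
      fix x y assume x: "x \<in> V" and y: "y \<in> V"
      show "E (\<tau> x) (\<tau> y) \<longleftrightarrow> E x y"
      proof -
        have Ei: "E s t \<longleftrightarrow> E t s" for s t using Esym by blast
        show ?thesis
          using cases[OF x] cases[OF y]
        proof (elim disjE exE)
          fix i j assume "x = X i" "y = X j" then show ?thesis using tX EXX by simp
        next
          fix i j assume "x = X i" "y = Y j" then show ?thesis using tX tY EXY by simp
        next
          fix i j assume "x = Y j" "y = X i" then show ?thesis using tX tY EXY Ei by metis
        next
          fix i j assume "x = Y i" "y = Y j" then show ?thesis using tY EYY by simp
        qed
      qed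
    qed
    define col :: "'a \<Rightarrow> nat" where "col x = (if x = v then 1 else if x \<in> A1 then 2 else 3)" for x
    have X1: "X 1 \<noteq> v" and Xm1: "X 1 \<noteq> X (-1)"
    proof -
      have "X (-1) = X (int p - 1)" using Xm by (metis minus_mod_self1 add.commute diff_conv_add_uminus mod_add_self2)
      moreover have m: "(1::int) \<in> {0..<int p}" "int p - 1 \<in> {0..<int p}" "(0::int) \<in> {0..<int p}"
        "(1::int) \<noteq> int p - 1" using p3 by auto
      moreover have "X 1 \<noteq> X (int p - 1)" "X 1 \<noteq> X 0"
        using Xi m unfolding inj_on_def by (metis one_neq_zero)+
      ultimately show "X 1 \<noteq> v" "X 1 \<noteq> X (-1)" using X0 by auto
    qed
    have "col ` V = {1..3}"
    proof
      show "col ` V \<subseteq> {1..3}" unfolding col_def by auto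
      have "col v = 1" "col (X 1) = 2" "col b = 3" using X1 XA1 bA vA part(2) unfolding col_def by auto
      moreover have "X 1 \<in> V" using XA1 part(1) by auto
      ultimately show "{1..3} \<subseteq> col ` V" using vV bV by (auto simp: numeral_eq_Suc le_Suc_eq) (metis imageI)+
    qed
    moreover have "\<forall>x\<in>V. col (\<tau> x) = col x"
    proof
      fix x assume x: "x \<in> V"
      have tv: "\<tau> v = v" using tX[of 0] X0 by simp
      have "\<tau> x = v \<longleftrightarrow> x = v" using tt x tv vV by metis
      moreover have "\<tau> x \<in> A1 \<longleftrightarrow> x \<in> A1"
        using cases[OF x] tX tY XA1 YA2 part(2) by auto
      ultimately show "col (\<tau> x) = col x" unfolding col_def by simp
    qed
    ultimately have "\<forall>x\<in>V. \<tau> x = x" using D3 aut unfolding distinguishing_def by blast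
    then show False using tX[of 1] Xm1 XA1 part(1) by auto
  qed
qed


theorem mainTheorem4:
  fixes V :: "'a set" and E :: "'a \<Rightarrow> 'a \<Rightarrow> bool"
    and A1 A2 :: "'a set" and p :: nat
  assumes G: "simple_graph V E"
    and theta: "dist_threshold V E = 3"
    and size: "card V > 4"
    and p: "prime p" "p \<notin> {3, 5}" "card V = 2 * p"
    and part: "A1 \<union> A2 = V" "A1 \<inter> A2 = {}" "card A1 = p" "card A2 = p"
    and classes: "\<forall>x\<in>A1. \<forall>y\<in>A1. degree V E x = degree V E y"
                 "\<forall>x\<in>A2. \<forall>y\<in>A2. degree V E x = degree V E y"
                 "\<forall>x\<in>A1. \<forall>y\<in>A2. degree V E x \<noteq> degree V E y"
  shows "(\<forall>v\<in>A1. 3 \<le> card {u\<in>A2. E v u} \<and> card {u\<in>A2. E v u} \<le> p - 3) \<and>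
         (\<forall>v\<in>A2. 3 \<le> card {u\<in>A1. E v u} \<and> card {u\<in>A1. E v u} \<le> p - 3)"
proof
  show "\<forall>v\<in>A1. 3 \<le> card {u\<in>A2. E v u} \<and> card {u\<in>A2. E v u} \<le> p - 3"
    by (rule side[OF G theta size p(1) p(3) part classes(3)])
  have c2: "\<forall>x\<in>A2. \<forall>y\<in>A1. degree V E x \<noteq> degree V E y" using classes(3) by metis
  show "\<forall>v\<in>A2. 3 \<le> card {u\<in>A1. E v u} \<and> card {u\<in>A1. E v u} \<le> p - 3"
    by (rule side[OF G theta size p(1) p(3) _ _ part(4) part(3) c2]) (use part in auto)
qed

end
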